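(* Let $X=(T,E)$ and $Y=(Z,F)$ be colored graphs and $W$ the fundamental magic biunitary of $A(X*Y)$. For each $\alpha\in Z$, the matrix $U^\alpha=(U^\alpha_{ij})_{i,j\in T}$ with $$U^\alpha_{ij}=\sum_{\beta\in Z}W_{i\alpha,j\beta}$$ is a magic biunitary.
   Context: A colored graph $X=(V,E)$ is a finite set $V$ with a partition $E=\{E_1,\dots,E_p\}$ of $(V\times V)-\Delta_V$. Free product: $X*Y$ has vertex set $T\times Z$ and partition $\{E_r^\circ\}\cup\{F_s^\circ\}$, $E_r^\circ=\{(i\alpha,j\alpha)\mid(i,j)\in E_r,\alpha\in Z\}$, $F_s^\circ=\{(i\alpha,j\beta)\mid i,j\in T,(\alpha,\beta)\in F_s\}$. A magic biunitary is a square matrix of projections whose rows and columns are partitions of unity. $A(X*Y)$ is the quotient of the universal C*-algebra generated by the entries of a $|T||Z|\times|T||Z|$ magic biunitary $W$ by the relations $Wd=dW$, $d$ the Laplacian of $X*Y$ ($d_{xx}=0$, $d_{xy}=c(k)$ for $(x,y)$ in the $k$-th class, $c$ injective into ${\mathbb C}$). *)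

theory Defs
  imports Complex_Main "HOL-Library.Disjoint_Sets"
begin

class complex_inner = ab_group_add +
  fixes cscale :: "complex \<Rightarrow> 'a \<Rightarrow> 'a"
    and cinner :: "'a \<Rightarrow> 'a \<Rightarrow> complex"
  assumes cscale_add_right: "cscale a (x + y) = cscale a x + cscale a y"
    and cscale_add_left: "cscale (a + b) x = cscale a x + cscale b x"
    and cscale_cscale: "cscale a (cscale b x) = cscale (a * b) x"
    and cscale_one: "cscale 1 x = x"
    and cinner_commute: "cinner x y = cnj (cinner y x)"
    and cinner_add_right: "cinner x (y + z) = cinner x y + cinner x z"
    and cinner_cscale_right: "cinner x (cscale a y) = a * cinner x y"
    and cinner_self_real: "Im (cinner x x) = 0"
    and cinner_self_nonneg: "0 \<le> Re (cinner x x)"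
    and cinner_self_eq_zero: "cinner x x = 0 \<longleftrightarrow> x = 0"

definition clinear :: "('a::complex_inner \<Rightarrow> 'a) \<Rightarrow> bool" where
  "clinear f \<longleftrightarrow> (\<forall>x y. f (x + y) = f x + f y) \<and> (\<forall>a x. f (cscale a x) = cscale a (f x))"

definition is_projection :: "('a::complex_inner \<Rightarrow> 'a) \<Rightarrow> bool" where
  "is_projection p \<longleftrightarrow> clinear p \<and> p \<circ> p = p \<and> (\<forall>x y. cinner (p x) y = cinner x (p y))"

definition opsum :: "'i set \<Rightarrow> ('i \<Rightarrow> 'a::complex_inner \<Rightarrow> 'a) \<Rightarrow> 'a \<Rightarrow> 'a" where
  "opsum I f = (\<lambda>v. \<Sum>i\<in>I. f i v)"

definition magic_biunitary :: "'i set \<Rightarrow> ('i \<Rightarrow> 'i \<Rightarrow> 'a::complex_inner \<Rightarrow> 'a) \<Rightarrow> bool" where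
  "magic_biunitary I M \<longleftrightarrow>
     (\<forall>i\<in>I. \<forall>j\<in>I. is_projection (M i j)) \<and>
     (\<forall>i\<in>I. opsum I (\<lambda>j. M i j) = id) \<and>
     (\<forall>j\<in>I. opsum I (\<lambda>i. M i j) = id)"

definition colored_graph :: "'v set \<Rightarrow> ('v \<times> 'v) set set \<Rightarrow> bool" where
  "colored_graph V E \<longleftrightarrow> finite V \<and> partition_on {(x, y). x \<in> V \<and> y \<in> V \<and> x \<noteq> y} E"

definition free_prod_classes ::
  "'t set \<Rightarrow> 'z set \<Rightarrow> ('t \<times> 't) set set \<Rightarrow> ('z \<times> 'z) set set \<Rightarrow> (('t \<times> 'z) \<times> ('t \<times> 'z)) set set" where
  "free_prod_classes T Z E F =
     (\<lambda>Er. {((i, a), (j, a)) | i j a. (i, j) \<in> Er \<and> a \<in> Z}) ` E \<union>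
     (\<lambda>Fs. {((i, a), (j, b)) | i j a b. i \<in> T \<and> j \<in> T \<and> (a, b) \<in> Fs}) ` F"

definition laplacian :: "('v \<times> 'v) set set \<Rightarrow> (('v \<times> 'v) set \<Rightarrow> complex) \<Rightarrow> 'v \<Rightarrow> 'v \<Rightarrow> complex" where
  "laplacian P c x y = (if x = y then 0 else c (THE B. B \<in> P \<and> (x, y) \<in> B))"

definition commutes_scalar :: "'i set \<Rightarrow> ('i \<Rightarrow> 'i \<Rightarrow> 'a::complex_inner \<Rightarrow> 'a) \<Rightarrow> ('i \<Rightarrow> 'i \<Rightarrow> complex) \<Rightarrow> bool" where
  "commutes_scalar V W d \<longleftrightarrow>
     (\<forall>x\<in>V. \<forall>y\<in>V. (\<lambda>v. \<Sum>z\<in>V. cscale (d z y) (W x z v)) = (\<lambda>v. \<Sum>z\<in>V. cscale (d x z) (W z y v)))"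

end

theory Submission
  imports Defs
begin

lemma cscale_zero_right: "cscale a (0::'a::complex_inner) = 0"
proof -
  have "cscale a (0::'a) = cscale a 0 + cscale a 0" by (metis add.right_neutral cscale_add_right)
  thus ?thesis by simp
qed

lemma cscale_zero_left: "cscale 0 (x::'a::complex_inner) = 0"
proof -
  have "cscale 0 x = cscale 0 x + cscale 0 x" by (metis add.right_neutral cscale_add_left)
  thus ?thesis by simp
qed

lemma cscale_minus_left: "cscale (- a) (x::'a::complex_inner) = - cscale a x"
proof -
  have "cscale (- a) x + cscale a x = 0" by (metis cscale_add_left cscale_zero_left add.left_inverse)
  thus ?thesis by (simp add: eq_neg_iff_add_eq_0)
qed

lemma cscale_diff_left: "cscale (a - b) (x::'a::complex_inner) = cscale a x - cscale b x"
  by (metis cscale_add_left cscale_minus_left diff_conv_add_uminus)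

lemma cscale_sum_right: "cscale a (\<Sum>i\<in>I. f i) = (\<Sum>i\<in>I. cscale a (f i :: 'a::complex_inner))"
  by (induction I rule: infinite_finite_induct) (auto simp: cscale_zero_right cscale_add_right)

lemma cscale_eq_zero: assumes "cscale k (x::'a::complex_inner) = 0" "k \<noteq> 0" shows "x = 0"
proof -
  have "x = cscale (inverse k * k) x" using assms(2) by (simp add: cscale_one)
  also have "\<dots> = cscale (inverse k) (cscale k x)" by (simp add: cscale_cscale)
  finally show ?thesis using assms(1) by (simp add: cscale_zero_right)
qed

lemma cinner_zero_right: "cinner x (0::'a::complex_inner) = 0"
proof -
  have "cinner x (0::'a) = cinner x 0 + cinner x 0" by (metis add.right_neutral cinner_add_right)
  thus ?thesis by simp
qed

lemma cinner_zero_left: "cinner (0::'a::complex_inner) x = 0"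
  by (metis cinner_commute cinner_zero_right complex_cnj_zero)

lemma cinner_add_left: "cinner (x + y) (z::'a::complex_inner) = cinner x z + cinner y z"
  by (metis cinner_commute cinner_add_right complex_cnj_add)

lemma cinner_sum_left: "cinner (\<Sum>i\<in>I. f i) (z::'a::complex_inner) = (\<Sum>i\<in>I. cinner (f i) z)"
  by (induction I rule: infinite_finite_induct) (auto simp: cinner_zero_left cinner_add_left)

lemma cinner_sum_right: "cinner z (\<Sum>i\<in>I. f i) = (\<Sum>i\<in>I. cinner z (f i :: 'a::complex_inner))"
  by (induction I rule: infinite_finite_induct) (auto simp: cinner_zero_right cinner_add_right)

lemma clinear_zero: "clinear p \<Longrightarrow> p 0 = 0"
  unfolding clinear_def by (metis add.right_neutral add_left_cancel)

lemma clinear_sum: "clinear p \<Longrightarrow> p (\<Sum>i\<in>I. f i) = (\<Sum>i\<in>I. p (f i))"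
  by (induction I rule: infinite_finite_induct) (auto simp: clinear_zero clinear_def)

lemma proj_apply: "is_projection p \<Longrightarrow> p (p x) = p x"
  unfolding is_projection_def by (metis comp_apply)

lemma proj_sa: "is_projection p \<Longrightarrow> cinner (p x) y = cinner x (p y)"
  unfolding is_projection_def by blast

lemma proj_clinear: "is_projection p \<Longrightarrow> clinear p"
  unfolding is_projection_def by blast

lemma orth:
  fixes p :: "'i \<Rightarrow> 'a::complex_inner \<Rightarrow> 'a"
  assumes fin: "finite I" and pr: "\<forall>i\<in>I. is_projection (p i)"
    and sum1: "\<And>v. (\<Sum>i\<in>I. p i v) = v" and k: "k \<in> I" and i: "i \<in> I" "i \<noteq> k"
  shows "p i (p k v) = 0"
proof -
  define x where "x = p k v"
  define n where "n j = cinner (p j x) (p j x)" for j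
  have px: "p k x = x" unfolding x_def using pr k proj_apply by blast
  have nj: "cinner (p j x) x = n j" if "j \<in> I" for j
    unfolding n_def using pr that by (metis proj_apply proj_sa)
  have "cinner x x = (\<Sum>j\<in>I. cinner (p j x) x)" using sum1[of x] cinner_sum_left by metis
  also have "\<dots> = (\<Sum>j\<in>I. n j)" using nj by simp
  also have "\<dots> = n k + (\<Sum>j\<in>I-{k}. n j)" using fin k by (simp add: sum.remove)
  finally have "(\<Sum>j\<in>I-{k}. n j) = 0" using px unfolding n_def by simp
  hence "(\<Sum>j\<in>I-{k}. Re (n j)) = 0" by (metis Re_sum zero_complex.simps(1))
  moreover have "\<forall>j\<in>I-{k}. 0 \<le> Re (n j)" unfolding n_def using cinner_self_nonneg by blast
  ultimately have "\<forall>j\<in>I-{k}. Re (n j) = 0" using fin sum_nonneg_eq_0_iff[of "I-{k}" "\<lambda>j. Re (n j)"] by blast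
  hence "Re (n i) = 0" using i by blast
  moreover have "Im (n i) = 0" unfolding n_def by (rule cinner_self_real)
  ultimately have "n i = 0" by (simp add: complex_eqI)
  thus ?thesis unfolding n_def x_def using cinner_self_eq_zero by blast
qed

lemma sum_proj:
  fixes p :: "'i \<Rightarrow> 'a::complex_inner \<Rightarrow> 'a"
  assumes fJ: "finite J" and pr: "\<forall>i\<in>J. is_projection (p i)"
    and o: "\<And>i j v. i \<in> J \<Longrightarrow> j \<in> J \<Longrightarrow> i \<noteq> j \<Longrightarrow> p i (p j v) = 0"
  shows "is_projection (opsum J p)"
proof -
  have lin: "clinear (opsum J p)"
    unfolding clinear_def opsum_def
    using pr by (auto simp: clinear_def is_projection_def sum.distrib cscale_sum_right)
  have idem: "opsum J p (opsum J p v) = opsum J p v" for v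
  proof -
    have "opsum J p (opsum J p v) = (\<Sum>i\<in>J. \<Sum>j\<in>J. p i (p j v))"
      unfolding opsum_def using pr by (simp add: clinear_sum proj_clinear)
    also have "\<dots> = (\<Sum>i\<in>J. p i v)"
    proof (rule sum.cong[OF refl])
      fix i assume iJ: "i \<in> J"
      show "(\<Sum>j\<in>J. p i (p j v)) = p i v"
      proof (cases "finite J")
        case True
        have "(\<Sum>j\<in>J. p i (p j v)) = p i (p i v) + (\<Sum>j\<in>J-{i}. p i (p j v))"
          using True iJ by (simp add: sum.remove)
        also have "\<dots> = p i v"
        proof -
          have "(\<Sum>j\<in>J-{i}. p i (p j v)) = 0" using o iJ by (intro sum.neutral) auto
          thus ?thesis using iJ pr proj_apply[of "p i" v] by simp
        qed
        finally show ?thesis .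
      next
        case False thus ?thesis using fJ by simp
      qed
    qed
    finally show ?thesis unfolding opsum_def .
  qed
  have sa: "cinner (opsum J p x) y = cinner x (opsum J p y)" for x y
    unfolding opsum_def using pr by (simp add: cinner_sum_left cinner_sum_right proj_sa)
  show ?thesis unfolding is_projection_def using lin idem sa by auto
qed

lemma sum_single: assumes "finite V" "a \<in> V" "\<And>z. z \<in> V \<Longrightarrow> z \<noteq> a \<Longrightarrow> f z = 0"
  shows "sum f V = f a"
proof -
  have "sum f V = f a + sum f (V - {a})" using assms by (simp add: sum.remove)
  also have "sum f (V - {a}) = 0" using assms by (intro sum.neutral) auto
  finally show ?thesis by simp
qed

lemma magic_row: "magic_biunitary V M \<Longrightarrow> i \<in> V \<Longrightarrow> (\<Sum>j\<in>V. M i j v) = v"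
  unfolding magic_biunitary_def opsum_def by (metis id_apply)

lemma magic_col: "magic_biunitary V M \<Longrightarrow> j \<in> V \<Longrightarrow> (\<Sum>i\<in>V. M i j v) = v"
  unfolding magic_biunitary_def opsum_def by (metis id_apply)

lemma magic_proj: "magic_biunitary V M \<Longrightarrow> i \<in> V \<Longrightarrow> j \<in> V \<Longrightarrow> is_projection (M i j)"
  unfolding magic_biunitary_def by blast

lemma magic_row_orth:
  assumes "finite V" "magic_biunitary V M" "i \<in> V" "a \<in> V" "z \<in> V" "a \<noteq> z"
  shows "M i a (M i z v) = 0"
  using orth[of V "M i" z a v] assms magic_row[OF assms(2,3)] magic_proj[OF assms(2,3)] by blast

lemma magic_col_orth:
  assumes "finite V" "magic_biunitary V M" "j \<in> V" "a \<in> V" "z \<in> V" "a \<noteq> z"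
  shows "M a j (M z j v) = 0"
  using orth[of V "\<lambda>i. M i j" z a v] assms magic_col[OF assms(2,3)] magic_proj[OF assms(2) _ assms(3)] by blast

lemma comm_key:
  fixes W :: "'i \<Rightarrow> 'i \<Rightarrow> 'a::complex_inner \<Rightarrow> 'a"
  assumes fin: "finite V" and mb: "magic_biunitary V W" and cs: "commutes_scalar V W d"
    and V: "x \<in> V" "a \<in> V" "b \<in> V" "y \<in> V" and ne: "d a y \<noteq> d x b"
  shows "W x a (W b y v) = 0"
proof -
  define u where "u = W b y v"
  have lin: "clinear (W x a)" using magic_proj[OF mb V(1,2)] proj_clinear by blast
  have eq: "(\<Sum>z\<in>V. cscale (d z y) (W x z u)) = (\<Sum>z\<in>V. cscale (d x z) (W z y u))"
    using cs V unfolding commutes_scalar_def by meson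
  have "W x a (\<Sum>z\<in>V. cscale (d z y) (W x z u)) = (\<Sum>z\<in>V. cscale (d z y) (W x a (W x z u)))"
    using lin by (simp add: clinear_sum clinear_def)
  also have "\<dots> = cscale (d a y) (W x a (W x a u))"
    by (rule sum_single[OF fin V(2)]) (simp add: magic_row_orth[OF fin mb V(1,2)] cscale_zero_right)
  also have "\<dots> = cscale (d a y) (W x a u)" using proj_apply magic_proj[OF mb V(1,2)] by metis
  finally have L: "W x a (\<Sum>z\<in>V. cscale (d z y) (W x z u)) = cscale (d a y) (W x a u)" .
  have "W x a (\<Sum>z\<in>V. cscale (d x z) (W z y u)) = (\<Sum>z\<in>V. cscale (d x z) (W x a (W z y u)))"
    using lin by (simp add: clinear_sum clinear_def)
  also have "\<dots> = cscale (d x b) (W x a (W b y u))"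
    by (rule sum_single[OF fin V(3)]) (simp add: u_def magic_col_orth[OF fin mb V(4) _ V(3)] cscale_zero_right clinear_zero[OF lin])
  also have "W b y u = u" unfolding u_def using proj_apply magic_proj[OF mb V(3,4)] by metis
  finally have R: "W x a (\<Sum>z\<in>V. cscale (d x z) (W z y u)) = cscale (d x b) (W x a u)" .
  have "cscale (d a y - d x b) (W x a u) = 0" using L R eq by (simp add: cscale_diff_left)
  thus ?thesis using ne cscale_eq_zero u_def by fastforce
qed

lemma part_unique: "partition_on A P \<Longrightarrow> B1 \<in> P \<Longrightarrow> B2 \<in> P \<Longrightarrow> p \<in> B1 \<Longrightarrow> p \<in> B2 \<Longrightarrow> B1 = B2"
  unfolding partition_on_def disjoint_def by blast

lemma part_cover: "partition_on A P \<Longrightarrow> p \<in> A \<Longrightarrow> \<exists>B\<in>P. p \<in> B"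
  unfolding partition_on_def by blast

lemma part_sub: "partition_on A P \<Longrightarrow> B \<in> P \<Longrightarrow> p \<in> B \<Longrightarrow> p \<in> A"
  unfolding partition_on_def by blast

lemma class_type:
  assumes gZ: "colored_graph Z F" and B: "B \<in> free_prod_classes T Z E F"
    and p: "(x, b) \<in> B" and q: "(x', b') \<in> B"
  shows "(snd x = snd b) = (snd x' = snd b')"
proof -
  have pF: "partition_on {(x, y). x \<in> Z \<and> y \<in> Z \<and> x \<noteq> y} F" using gZ unfolding colored_graph_def by blast
  from B consider (e) Er where "Er \<in> E" "B = {((i, a), (j, a)) | i j a. (i, j) \<in> Er \<and> a \<in> Z}"
    | (f) Fs where "Fs \<in> F" "B = {((i, a), (j, b)) | i j a b. i \<in> T \<and> j \<in> T \<and> (a, b) \<in> Fs}"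
    unfolding free_prod_classes_def by blast
  thus ?thesis
  proof cases
    case e thus ?thesis using p q by auto
  next
    case f
    have "\<And>u w. (u, w) \<in> B \<Longrightarrow> snd u \<noteq> snd w"
      using f part_sub[OF pF f(1)] by fastforce
    thus ?thesis using p q by blast
  qed
qed

lemma class_ex1:
  assumes gT: "colored_graph T E" and gZ: "colored_graph Z F"
    and x: "x \<in> T \<times> Z" and b: "b \<in> T \<times> Z" and ne: "x \<noteq> b"
  shows "\<exists>!B. B \<in> free_prod_classes T Z E F \<and> (x, b) \<in> B"
proof -
  have pE: "partition_on {(x, y). x \<in> T \<and> y \<in> T \<and> x \<noteq> y} E" using gT unfolding colored_graph_def by blast
  have pF: "partition_on {(x, y). x \<in> Z \<and> y \<in> Z \<and> x \<noteq> y} F" using gZ unfolding colored_graph_def by blast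
  obtain i \<alpha> j \<beta> where xb: "x = (i, \<alpha>)" "b = (j, \<beta>)" by fastforce
  have ex: "\<exists>B. B \<in> free_prod_classes T Z E F \<and> (x, b) \<in> B"
  proof (cases "\<alpha> = \<beta>")
    case True
    then have "i \<noteq> j" using ne xb by auto
    then obtain Er where Er: "Er \<in> E" "(i, j) \<in> Er" using part_cover[OF pE, of "(i,j)"] x b xb by auto
    show ?thesis
      apply (rule exI[of _ "{((i, a), (j, a)) | i j a. (i, j) \<in> Er \<and> a \<in> Z}"])
      using Er True x xb b unfolding free_prod_classes_def by auto
  next
    case False
    then obtain Fs where Fs: "Fs \<in> F" "(\<alpha>, \<beta>) \<in> Fs" using part_cover[OF pF, of "(\<alpha>,\<beta>)"] x b xb by auto
    show ?thesis
      apply (rule exI[of _ "{((i, a), (j, b)) | i j a b. i \<in> T \<and> j \<in> T \<and> (a, b) \<in> Fs}"])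
      using Fs x xb b unfolding free_prod_classes_def by auto
  qed
  have un: "B1 = B2" if B1: "B1 \<in> free_prod_classes T Z E F" "(x, b) \<in> B1"
    and B2: "B2 \<in> free_prod_classes T Z E F" "(x, b) \<in> B2" for B1 B2
  proof -
    have same: "(snd x = snd b) = (snd u = snd w)" if "B \<in> free_prod_classes T Z E F" "(x,b) \<in> B" "(u,w) \<in> B" for B u w
      using class_type[OF gZ that] .
    from B1(1) consider (e) Er where "Er \<in> E" "B1 = {((i, a), (j, a)) | i j a. (i, j) \<in> Er \<and> a \<in> Z}"
      | (f) Fs where "Fs \<in> F" "B1 = {((i, a), (j, b)) | i j a b. i \<in> T \<and> j \<in> T \<and> (a, b) \<in> Fs}"
      unfolding free_prod_classes_def by blast
    then show ?thesis
    proof cases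
      case e
      from B2(1) consider (e2) Er2 where "Er2 \<in> E" "B2 = {((i, a), (j, a)) | i j a. (i, j) \<in> Er2 \<and> a \<in> Z}"
        | (f2) Fs2 where "Fs2 \<in> F" "B2 = {((i, a), (j, b)) | i j a b. i \<in> T \<and> j \<in> T \<and> (a, b) \<in> Fs2}"
        unfolding free_prod_classes_def by blast
      then show ?thesis
      proof cases
        case e2
        have "(i, j) \<in> Er" "(i, j) \<in> Er2" using e e2 B1 B2 xb by auto
        hence "Er = Er2" using part_unique[OF pE e(1) e2(1)] by blast
        thus ?thesis using e e2 by simp
      next
        case f2
        have "\<alpha> = \<beta>" using e B1 xb by auto
        moreover have "(\<alpha>, \<beta>) \<in> Fs2" using f2 B2 xb by auto
        ultimately show ?thesis using part_sub[OF pF f2(1)] by auto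
      qed
    next
      case f
      have ab: "(\<alpha>, \<beta>) \<in> Fs" using f B1 xb by auto
      hence "\<alpha> \<noteq> \<beta>" using part_sub[OF pF f(1)] by auto
      from B2(1) consider (e2) Er2 where "Er2 \<in> E" "B2 = {((i, a), (j, a)) | i j a. (i, j) \<in> Er2 \<and> a \<in> Z}"
        | (f2) Fs2 where "Fs2 \<in> F" "B2 = {((i, a), (j, b)) | i j a b. i \<in> T \<and> j \<in> T \<and> (a, b) \<in> Fs2}"
        unfolding free_prod_classes_def by blast
      then show ?thesis
      proof cases
        case e2
        have "\<alpha> = \<beta>" using e2 B2 xb by auto
        thus ?thesis using \<open>\<alpha> \<noteq> \<beta>\<close> by simp
      next
        case f2
        have "(\<alpha>, \<beta>) \<in> Fs2" using f2 B2 xb by auto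
        hence "Fs = Fs2" using part_unique[OF pF f(1) f2(1)] ab by blast
        thus ?thesis using f f2 by simp
      qed
    qed
  qed
  show ?thesis using ex un by blast
qed

lemma lap_class:
  assumes gT: "colored_graph T E" and gZ: "colored_graph Z F"
    and x: "x \<in> T \<times> Z" and b: "b \<in> T \<times> Z" and ne: "x \<noteq> b"
  obtains B where "B \<in> free_prod_classes T Z E F" "(x, b) \<in> B"
    "laplacian (free_prod_classes T Z E F) c x b = c B"
proof -
  let ?B = "THE B. B \<in> free_prod_classes T Z E F \<and> (x, b) \<in> B"
  have "?B \<in> free_prod_classes T Z E F \<and> (x, b) \<in> ?B"
    using theI'[OF class_ex1[OF assms]] .
  moreover have "laplacian (free_prod_classes T Z E F) c x b = c ?B"
    unfolding laplacian_def using ne by simp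
  ultimately show ?thesis using that by blast
qed

lemma lap_ne:
  assumes gT: "colored_graph T E" and gZ: "colored_graph Z F"
    and inj: "inj_on c (free_prod_classes T Z E F)"
    and V: "x \<in> T \<times> Z" "b \<in> T \<times> Z" "a \<in> T \<times> Z" "y \<in> T \<times> Z"
    and ne: "x \<noteq> b" "a \<noteq> y" and ty: "(snd x = snd b) \<noteq> (snd a = snd y)"
  shows "laplacian (free_prod_classes T Z E F) c a y \<noteq> laplacian (free_prod_classes T Z E F) c x b"
proof
  assume eq: "laplacian (free_prod_classes T Z E F) c a y = laplacian (free_prod_classes T Z E F) c x b"
  obtain B1 where B1: "B1 \<in> free_prod_classes T Z E F" "(x, b) \<in> B1"
    "laplacian (free_prod_classes T Z E F) c x b = c B1" using lap_class[OF gT gZ V(1,2) ne(1)] by blast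
  obtain B2 where B2: "B2 \<in> free_prod_classes T Z E F" "(a, y) \<in> B2"
    "laplacian (free_prod_classes T Z E F) c a y = c B2" using lap_class[OF gT gZ V(3,4) ne(2)] by blast
  have "B1 = B2" using inj B1 B2 eq unfolding inj_on_def by metis
  thus False using class_type[OF gZ B1(1) B1(2)] B2(2) ty by blast
qed

theorem lemma6p2:
  fixes T :: "'t set" and Z :: "'z set"
    and E :: "('t \<times> 't) set set" and F :: "('z \<times> 'z) set set"
    and c :: "(('t \<times> 'z) \<times> ('t \<times> 'z)) set \<Rightarrow> complex"
    and W :: "'t \<times> 'z \<Rightarrow> 't \<times> 'z \<Rightarrow> 'h::complex_inner \<Rightarrow> 'h"
    and \<alpha> :: 'z
  assumes "colored_graph T E" and "colored_graph Z F"
    and "inj_on c (free_prod_classes T Z E F)"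
    and "magic_biunitary (T \<times> Z) W"
    and "commutes_scalar (T \<times> Z) W (laplacian (free_prod_classes T Z E F) c)"
    and "\<alpha> \<in> Z"
  shows "magic_biunitary T (\<lambda>i j. opsum Z (\<lambda>\<beta>. W (i, \<alpha>) (j, \<beta>)))"
proof -
  note gT = assms(1) and gZ = assms(2) and inj = assms(3) and mb = assms(4) and cs = assms(5) and aZ = assms(6)
  have fT: "finite T" using gT unfolding colored_graph_def by blast
  have fZ: "finite Z" using gZ unfolding colored_graph_def by blast
  have fV: "finite (T \<times> Z)" using fT fZ by simp
  have zp: "W x a (W b y v) = 0" if V: "x \<in> T \<times> Z" "a \<in> T \<times> Z" "b \<in> T \<times> Z" "y \<in> T \<times> Z"
    and ty: "(snd x = snd b) \<noteq> (snd a = snd y)" for x a b y v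
  proof (cases "x = b")
    case True
    hence "a \<noteq> y" using ty by auto
    thus ?thesis using True magic_row_orth[OF fV mb V(1,2,4)] by simp
  next
    case xb: False
    show ?thesis
    proof (cases "a = y")
      case True
      thus ?thesis using magic_col_orth[OF fV mb V(2,1,3) xb] by simp
    next
      case False
      show ?thesis
        by (rule comm_key[OF fV mb cs V]) (rule lap_ne[OF gT gZ inj V(1,3,2,4) xb False ty])
    qed
  qed
  have proj: "is_projection (opsum Z (\<lambda>\<beta>. W (i, \<alpha>) (j, \<beta>)))" if "i \<in> T" "j \<in> T" for i j
  proof (rule sum_proj[OF fZ])
    show "\<forall>\<beta>\<in>Z. is_projection (W (i, \<alpha>) (j, \<beta>))" using that aZ magic_proj[OF mb] by blast
    show "W (i, \<alpha>) (j, \<beta>) (W (i, \<alpha>) (j, \<gamma>) v) = 0" if "\<beta> \<in> Z" "\<gamma> \<in> Z" "\<beta> \<noteq> \<gamma>" for \<beta> \<gamma> v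
      using magic_row_orth[OF fV mb, of "(i, \<alpha>)" "(j, \<beta>)" "(j, \<gamma>)" v] that \<open>i \<in> T\<close> \<open>j \<in> T\<close> aZ by blast
  qed
  have row: "opsum T (\<lambda>j. opsum Z (\<lambda>\<beta>. W (i, \<alpha>) (j, \<beta>))) = id" if i: "i \<in> T" for i
  proof
    fix v
    have "opsum T (\<lambda>j. opsum Z (\<lambda>\<beta>. W (i, \<alpha>) (j, \<beta>))) v = (\<Sum>j\<in>T. \<Sum>\<beta>\<in>Z. W (i, \<alpha>) (j, \<beta>) v)"
      unfolding opsum_def ..
    also have "\<dots> = (\<Sum>y\<in>T \<times> Z. W (i, \<alpha>) y v)" by (simp add: sum.cartesian_product)
    also have "\<dots> = v" using magic_row[OF mb] i aZ by simp
    finally show "opsum T (\<lambda>j. opsum Z (\<lambda>\<beta>. W (i, \<alpha>) (j, \<beta>))) v = id v" by simp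
  qed
  have AB: "(\<Sum>j\<in>T. W (i, \<alpha>) (j, \<beta>) v) = (\<Sum>i'\<in>T. W (i', \<alpha>) (j', \<beta>) v)"
    if i: "i \<in> T" and j': "j' \<in> T" and b: "\<beta> \<in> Z" for i j' \<beta> v
  proof -
    let ?K = "\<Sum>j\<in>T. \<Sum>i'\<in>T. W (i, \<alpha>) (j, \<beta>) (W (i', \<alpha>) (j', \<beta>) v)"
    have "(\<Sum>j\<in>T. W (i, \<alpha>) (j, \<beta>) v) = (\<Sum>j\<in>T. W (i, \<alpha>) (j, \<beta>) (\<Sum>y\<in>T \<times> Z. W y (j', \<beta>) v))"
      using magic_col[OF mb, of "(j', \<beta>)" v] j' b by simp
    also have "\<dots> = (\<Sum>j\<in>T. \<Sum>y\<in>T \<times> Z. W (i, \<alpha>) (j, \<beta>) (W y (j', \<beta>) v))"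
      using magic_proj[OF mb] i aZ b by (intro sum.cong refl clinear_sum proj_clinear) auto
    also have "\<dots> = (\<Sum>j\<in>T. \<Sum>i'\<in>T. \<Sum>\<gamma>\<in>Z. W (i, \<alpha>) (j, \<beta>) (W (i', \<gamma>) (j', \<beta>) v))"
      by (simp add: sum.cartesian_product)
    also have "\<dots> = ?K"
    proof (intro sum.cong refl)
      fix j i' assume "j \<in> T" "i' \<in> T"
      thus "(\<Sum>\<gamma>\<in>Z. W (i, \<alpha>) (j, \<beta>) (W (i', \<gamma>) (j', \<beta>) v)) = W (i, \<alpha>) (j, \<beta>) (W (i', \<alpha>) (j', \<beta>) v)"
        using i j' b aZ by (intro sum_single[OF fZ aZ] zp) auto
    qed
    finally have 1: "(\<Sum>j\<in>T. W (i, \<alpha>) (j, \<beta>) v) = ?K" .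
    have "(\<Sum>i'\<in>T. W (i', \<alpha>) (j', \<beta>) v) = (\<Sum>z\<in>T \<times> Z. W (i, \<alpha>) z (\<Sum>i'\<in>T. W (i', \<alpha>) (j', \<beta>) v))"
      using magic_row[OF mb] i aZ by simp
    also have "\<dots> = (\<Sum>z\<in>T \<times> Z. \<Sum>i'\<in>T. W (i, \<alpha>) z (W (i', \<alpha>) (j', \<beta>) v))"
      using magic_proj[OF mb] i aZ by (intro sum.cong refl clinear_sum proj_clinear) auto
    also have "\<dots> = (\<Sum>j\<in>T. \<Sum>\<gamma>\<in>Z. \<Sum>i'\<in>T. W (i, \<alpha>) (j, \<gamma>) (W (i', \<alpha>) (j', \<beta>) v))"
      unfolding sum.cartesian_product[of "\<lambda>j \<gamma>. \<Sum>i'\<in>T. W (i, \<alpha>) (j, \<gamma>) (W (i', \<alpha>) (j', \<beta>) v)" Z T]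
      by (intro sum.cong refl) auto
    also have "\<dots> = ?K"
    proof (intro sum.cong refl)
      fix j assume j: "j \<in> T"
      show "(\<Sum>\<gamma>\<in>Z. \<Sum>i'\<in>T. W (i, \<alpha>) (j, \<gamma>) (W (i', \<alpha>) (j', \<beta>) v)) = (\<Sum>i'\<in>T. W (i, \<alpha>) (j, \<beta>) (W (i', \<alpha>) (j', \<beta>) v))"
        using i j j' b aZ by (intro sum_single[OF fZ b] sum.neutral ballI zp) auto
    qed
    finally show ?thesis using 1 by simp
  qed
  have col: "opsum T (\<lambda>i. opsum Z (\<lambda>\<beta>. W (i, \<alpha>) (j, \<beta>))) = id" if j: "j \<in> T" for j
  proof
    fix v
    have "opsum T (\<lambda>i. opsum Z (\<lambda>\<beta>. W (i, \<alpha>) (j, \<beta>))) v = (\<Sum>i\<in>T. \<Sum>\<beta>\<in>Z. W (i, \<alpha>) (j, \<beta>) v)"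
      unfolding opsum_def ..
    also have "\<dots> = (\<Sum>\<beta>\<in>Z. \<Sum>i\<in>T. W (i, \<alpha>) (j, \<beta>) v)" by (rule sum.swap)
    also have "\<dots> = (\<Sum>\<beta>\<in>Z. \<Sum>j'\<in>T. W (j, \<alpha>) (j', \<beta>) v)"
    proof (rule sum.cong[OF refl])
      fix \<beta> assume "\<beta> \<in> Z"
      show "(\<Sum>i\<in>T. W (i, \<alpha>) (j, \<beta>) v) = (\<Sum>j'\<in>T. W (j, \<alpha>) (j', \<beta>) v)"
        using AB[OF j j \<open>\<beta> \<in> Z\<close>, of v] by simp
    qed
    also have "\<dots> = (\<Sum>j'\<in>T. \<Sum>\<beta>\<in>Z. W (j, \<alpha>) (j', \<beta>) v)" by (rule sum.swap)
    also have "\<dots> = (\<Sum>y\<in>T \<times> Z. W (j, \<alpha>) y v)" by (simp add: sum.cartesian_product)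
    also have "\<dots> = v" using magic_row[OF mb] j aZ by simp
    finally show "opsum T (\<lambda>i. opsum Z (\<lambda>\<beta>. W (i, \<alpha>) (j, \<beta>))) v = id v" by simp
  qed
  show ?thesis unfolding magic_biunitary_def using proj row col by blast
qed
end
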